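(* Let $f\in\mathbb{R}[x,y]$ be a polynomial of degree $n\ge 3$ and let $p$ be a point of the equator $\{\omega=0\}$ of $\mathbb{S}^2$. Then $p$ is a flat point of the quadratic form $Q$ if and only if $p$ is a singular point at infinity of $\mathbb{Y}_k$, $k=1,2$. Moreover, if $p=(u_0,v_0,0)$ is a singular point at infinity of $\mathbb{Y}_k$ and $f_n$ has no repeated factors, then $H_f(u_0,v_0,0)<0$.
   Context: Write $f=\sum_{i=0}^n f_i$ with $f_i$ homogeneous of degree $i$, $F(u,v,\omega)=\sum_{i=0}^n\omega^{n-i}f_i(u,v)$, $A=-uF_{uu}-vF_{uv}$, $B=-uF_{uv}-vF_{vv}$, $S=u^2F_{uu}+2uvF_{uv}+v^2F_{vv}$, and let $Q=\omega^2F_{uu}du^2+2\omega^2F_{uv}du\,dv+\omega^2F_{vv}dv^2+2\omega A\,du\,d\omega+2\omega B\,dv\,d\omega+S\,d\omega^2$, restricted to the unit sphere $\mathbb{S}^2\subset\mathbb{R}^3=\{(u,v,\omega)\}$; on each open hemisphere it is a nonvanishing multiple of the form induced from $\mathrm{II}_f=f_{xx}dx^2+2f_{xy}dxdy+f_{yy}dy^2$ via $(u,v,\omega)\mapsto(u/\omega,v/\omega)$. $\mathbb{Y}_1,\mathbb{Y}_2$ are the two fields of lines on $\mathbb{S}^2$ given by the solutions $\xi\in T_p\mathbb{S}^2$ of $Q_p(\xi,\xi)=0$. A flat point of $Q$ is a point where all coefficients $\omega^2F_{uu},\omega^2F_{uv},\omega^2F_{vv},\omega A,\omega B,S$ vanish.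 A singular point of $\mathbb{Y}_k$ is a point $p$ at which the restriction of $Q_p$ to $T_p\mathbb{S}^2$ vanishes identically (so the line fields are not determined there); a singular point at infinity is a singular point lying on the equator. $H_f$ is the homogenization $z^{2n-4}\mathrm{Hess}\,f(x/z,y/z)$ of $\mathrm{Hess}\,f=f_{xx}f_{yy}-f_{xy}^2$, so $H_f(x,y,0)=\mathrm{Hess}\,f_n(x,y)$. *)

theory Defs
  imports "HOL-Analysis.Analysis"
begin

text \<open>A real polynomial f in x,y of degree at most n is given by its coefficients
  c i j (coefficient of x^i y^j), with c i j = 0 whenever i + j > n.\<close>

definition coeffs_bounded :: "(nat \<Rightarrow> nat \<Rightarrow> real) \<Rightarrow> nat \<Rightarrow> bool" where
  "coeffs_bounded c n \<longleftrightarrow> (\<forall>i j. n < i + j \<longrightarrow> c i j = 0)"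

definition has_degree :: "(nat \<Rightarrow> nat \<Rightarrow> real) \<Rightarrow> nat \<Rightarrow> bool" where
  "has_degree c n \<longleftrightarrow> coeffs_bounded c n \<and> (\<exists>i j. i + j = n \<and> c i j \<noteq> 0)"

definition polyf :: "(nat \<Rightarrow> nat \<Rightarrow> real) \<Rightarrow> nat \<Rightarrow> real \<Rightarrow> real \<Rightarrow> real" where
  "polyf c n x y = (\<Sum>i\<le>n. \<Sum>j\<le>n - i. c i j * x ^ i * y ^ j)"

definition hom_part :: "(nat \<Rightarrow> nat \<Rightarrow> real) \<Rightarrow> nat \<Rightarrow> real \<Rightarrow> real \<Rightarrow> real" where
  "hom_part c k x y = (\<Sum>i\<le>k. c i (k - i) * x ^ i * y ^ (k - i))"

definition homF :: "(nat \<Rightarrow> nat \<Rightarrow> real) \<Rightarrow> nat \<Rightarrow> real \<Rightarrow> real \<Rightarrow> real \<Rightarrow> real" where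
  "homF c n u v w = (\<Sum>k\<le>n. w ^ (n - k) * hom_part c k u v)"

definition d_uu :: "(real \<Rightarrow> real \<Rightarrow> real) \<Rightarrow> real \<Rightarrow> real \<Rightarrow> real" where
  "d_uu g u v = deriv (\<lambda>s. deriv (\<lambda>t. g t v) s) u"
definition d_uv :: "(real \<Rightarrow> real \<Rightarrow> real) \<Rightarrow> real \<Rightarrow> real \<Rightarrow> real" where
  "d_uv g u v = deriv (\<lambda>s. deriv (\<lambda>t. g t s) u) v"
definition d_vv :: "(real \<Rightarrow> real \<Rightarrow> real) \<Rightarrow> real \<Rightarrow> real \<Rightarrow> real" where
  "d_vv g u v = deriv (\<lambda>s. deriv (\<lambda>t. g u t) s) v"

definition F_uu where "F_uu c n u v w = d_uu (\<lambda>a b. homF c n a b w) u v"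
definition F_uv where "F_uv c n u v w = d_uv (\<lambda>a b. homF c n a b w) u v"
definition F_vv where "F_vv c n u v w = d_vv (\<lambda>a b. homF c n a b w) u v"

definition coefA where "coefA c n u v w = - u * F_uu c n u v w - v * F_uv c n u v w"
definition coefB where "coefB c n u v w = - u * F_uv c n u v w - v * F_vv c n u v w"
definition coefS where
  "coefS c n u v w = u\<^sup>2 * F_uu c n u v w + 2 * u * v * F_uv c n u v w + v\<^sup>2 * F_vv c n u v w"

text \<open>The quadratic form Q at the point p = (u,v,w), evaluated on xi = (a,b,d)
  (d the d\<omega> component).\<close>
definition formQ :: "(nat \<Rightarrow> nat \<Rightarrow> real) \<Rightarrow> nat \<Rightarrow> real \<times> real \<times> real \<Rightarrow> real \<times> real \<times> real \<Rightarrow> real" where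
  "formQ c n p xi = (case p of (u, v, w) \<Rightarrow> case xi of (a, b, d) \<Rightarrow>
      w\<^sup>2 * F_uu c n u v w * a\<^sup>2 + 2 * w\<^sup>2 * F_uv c n u v w * a * b + w\<^sup>2 * F_vv c n u v w * b\<^sup>2
      + 2 * w * coefA c n u v w * a * d + 2 * w * coefB c n u v w * b * d
      + coefS c n u v w * d\<^sup>2)"

definition on_sphere :: "real \<times> real \<times> real \<Rightarrow> bool" where
  "on_sphere p = (case p of (u, v, w) \<Rightarrow> u\<^sup>2 + v\<^sup>2 + w\<^sup>2 = 1)"

definition tangent_S2 :: "real \<times> real \<times> real \<Rightarrow> real \<times> real \<times> real \<Rightarrow> bool" where
  "tangent_S2 p xi = (case p of (u, v, w) \<Rightarrow> case xi of (a, b, d) \<Rightarrow> u * a + v * b + w * d = 0)"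

definition flat_point where
  "flat_point c n p = (case p of (u, v, w) \<Rightarrow>
     w\<^sup>2 * F_uu c n u v w = 0 \<and> w\<^sup>2 * F_uv c n u v w = 0 \<and> w\<^sup>2 * F_vv c n u v w = 0 \<and>
     w * coefA c n u v w = 0 \<and> w * coefB c n u v w = 0 \<and> coefS c n u v w = 0)"

text \<open>singular point of the line fields Y_1, Y_2 (common to both): the restriction of
  Q_p to T_p S^2 vanishes identically\<close>
definition singular_point where
  "singular_point c n p \<longleftrightarrow> on_sphere p \<and> (\<forall>xi. tangent_S2 p xi \<longrightarrow> formQ c n p xi = 0)"

definition singular_point_at_infinity where
  "singular_point_at_infinity c n p \<longleftrightarrow> singular_point c n p \<and> snd (snd p) = 0"

definition hess :: "(real \<Rightarrow> real \<Rightarrow> real) \<Rightarrow> real \<Rightarrow> real \<Rightarrow> real" where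
  "hess g x y = d_uu g x y * d_vv g x y - (d_uv g x y)\<^sup>2"

text \<open>Real polynomial functions in two variables, and "no repeated factors" in R[x,y]
  (polynomial functions on R^2 correspond bijectively to polynomials).\<close>
definition is_poly2 :: "(real \<Rightarrow> real \<Rightarrow> real) \<Rightarrow> bool" where
  "is_poly2 g \<longleftrightarrow> (\<exists>(a :: nat \<Rightarrow> nat \<Rightarrow> real) N. \<forall>x y. g x y = (\<Sum>i\<le>N. \<Sum>j\<le>N. a i j * x ^ i * y ^ j))"

definition no_repeated_factors :: "(real \<Rightarrow> real \<Rightarrow> real) \<Rightarrow> bool" where
  "no_repeated_factors g \<longleftrightarrow>
     \<not> (\<exists>h k. is_poly2 h \<and> is_poly2 k \<and> \<not> (\<exists>r. \<forall>x y. h x y = r) \<and>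
             (\<forall>x y. g x y = (h x y)\<^sup>2 * k x y))"

end

theory Submission
  imports Defs "HOL-Computational_Algebra.Polynomial"
begin
definition G :: "nat \<Rightarrow> (nat\<Rightarrow>real) \<Rightarrow> (nat\<Rightarrow>nat) \<Rightarrow> (nat\<Rightarrow>nat) \<Rightarrow> real \<Rightarrow> real \<Rightarrow> real" where
 "G n a p q x y = (\<Sum>i\<le>n. a i * x^(p i) * y^(q i))"

lemma G_dx: "((\<lambda>t. G n a p q t y) has_real_derivative G n (\<lambda>i. a i * of_nat (p i)) (\<lambda>i. p i - 1) q x y) (at x)"
  unfolding G_def
  by (rule DERIV_sum[THEN DERIV_cong]) (auto intro!: derivative_eq_intros sum.cong)

lemma G_dy: "((\<lambda>t. G n a p q x t) has_real_derivative G n (\<lambda>i. a i * of_nat (q i)) p (\<lambda>i. q i - 1) x y) (at y)"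
  unfolding G_def
  by (rule DERIV_sum[THEN DERIV_cong]) (auto intro!: derivative_eq_intros sum.cong)

lemma d_uu_G: "d_uu (G n a p q) u v = G n (\<lambda>i. a i * of_nat (p i) * of_nat (p i - 1)) (\<lambda>i. p i - 1 - 1) q u v"
proof -
  have "(\<lambda>s. deriv (\<lambda>t. G n a p q t v) s) = (\<lambda>s. G n (\<lambda>i. a i * of_nat (p i)) (\<lambda>i. p i - 1) q s v)"
    using G_dx DERIV_imp_deriv by (intro ext) blast
  then show ?thesis unfolding d_uu_def using G_dx DERIV_imp_deriv by metis
qed

lemma d_uv_G: "d_uv (G n a p q) u v = G n (\<lambda>i. a i * of_nat (p i) * of_nat (q i)) (\<lambda>i. p i - 1) (\<lambda>i. q i - 1) u v"
proof -
  have "(\<lambda>s. deriv (\<lambda>t. G n a p q t s) u) = (\<lambda>s. G n (\<lambda>i. a i * of_nat (p i)) (\<lambda>i. p i - 1) q u s)"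
    using G_dx DERIV_imp_deriv by (intro ext) blast
  then show ?thesis unfolding d_uv_def using G_dy DERIV_imp_deriv by metis
qed

lemma d_vv_G: "d_vv (G n a p q) u v = G n (\<lambda>i. a i * of_nat (q i) * of_nat (q i - 1)) p (\<lambda>i. q i - 1 - 1) u v"
proof -
  have "(\<lambda>s. deriv (\<lambda>t. G n a p q u t) s) = (\<lambda>s. G n (\<lambda>i. a i * of_nat (q i)) p (\<lambda>i. q i - 1) u s)"
    using G_dy DERIV_imp_deriv by (intro ext) blast
  then show ?thesis unfolding d_vv_def using G_dy DERIV_imp_deriv by metis
qed
lemma pw1: "(x::real) * (of_nat m * x^(m-1)) = of_nat m * x^m"
  by (cases m) auto

lemma term3: assumes "i \<le> n"
  shows "u * (a i * real i * u^(i-1) * v^(n-i)) + v * (a i * real (n-i) * u^i * v^(n-i-1)) = real n * (a i * u^i * (v::real)^(n-i))"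
proof -
  have "u * (a i * real i * u^(i-1) * v^(n-i)) = a i * v^(n-i) * (u * (real i * u^(i-1)))" by (simp add: algebra_simps)
  also have "\<dots> = a i * v^(n-i) * real i * u^i" by (simp only: pw1 mult.assoc)
  finally have 1: "u * (a i * real i * u^(i-1) * v^(n-i)) = a i * v^(n-i) * real i * u^i" .
  have "v * (a i * real (n-i) * u^i * v^(n-i-1)) = a i * u^i * (v * (real (n-i) * v^(n-i-1)))" by (simp add: algebra_simps)
  also have "\<dots> = a i * u^i * real (n-i) * v^(n-i)" by (simp only: pw1 mult.assoc)
  finally have 2: "v * (a i * real (n-i) * u^i * v^(n-i-1)) = a i * u^i * real (n-i) * v^(n-i)" .
  have 3: "real (n-i) = real n - real i" using assms by (simp add: of_nat_diff)
  show ?thesis unfolding 1 2 unfolding 3 by (simp add: algebra_simps)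
qed

lemma term1: assumes "i \<le> n"
  shows "u * (a i * real i * real (i-1) * u^(i-1-1) * v^(n-i)) + v * (a i * real i * real (n-i) * u^(i-1) * v^(n-i-1))
     = real (n-1) * (a i * real i * u^(i-1) * (v::real)^(n-i))"
proof (cases "i = 0")
  case True then show ?thesis by simp
next
  case False
  have "u * (a i * real i * real (i-1) * u^(i-1-1) * v^(n-i)) = a i * real i * v^(n-i) * (u * (real (i-1) * u^(i-1-1)))" by (simp add: algebra_simps)
  also have "\<dots> = a i * real i * v^(n-i) * real (i-1) * u^(i-1)" by (simp only: pw1 mult.assoc)
  finally have 1: "u * (a i * real i * real (i-1) * u^(i-1-1) * v^(n-i)) = a i * real i * v^(n-i) * real (i-1) * u^(i-1)" .
  have "v * (a i * real i * real (n-i) * u^(i-1) * v^(n-i-1)) = a i * real i * u^(i-1) * (v * (real (n-i) * v^(n-i-1)))" by (simp add: algebra_simps)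
  also have "\<dots> = a i * real i * u^(i-1) * real (n-i) * v^(n-i)" by (simp only: pw1 mult.assoc)
  finally have 2: "v * (a i * real i * real (n-i) * u^(i-1) * v^(n-i-1)) = a i * real i * u^(i-1) * real (n-i) * v^(n-i)" .
  have 3: "real (n-i) = real n - real i" "real (i-1) = real i - 1" "real (n-1) = real n - 1" using assms False by (simp_all add: of_nat_diff)
  show ?thesis unfolding 1 2 unfolding 3 by (simp add: algebra_simps)
qed

lemma term2: assumes "i \<le> n"
  shows "u * (a i * real i * real (n-i) * u^(i-1) * v^(n-i-1)) + v * (a i * real (n-i) * real (n-i-1) * u^i * v^(n-i-1-1))
     = real (n-1) * (a i * real (n-i) * u^i * (v::real)^(n-i-1))"
proof (cases "i = n")
  case True then show ?thesis by simp
next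
  case False
  have "u * (a i * real i * real (n-i) * u^(i-1) * v^(n-i-1)) = a i * real (n-i) * v^(n-i-1) * (u * (real i * u^(i-1)))" by (simp add: algebra_simps)
  also have "\<dots> = a i * real (n-i) * v^(n-i-1) * real i * u^i" by (simp only: pw1 mult.assoc)
  finally have 1: "u * (a i * real i * real (n-i) * u^(i-1) * v^(n-i-1)) = a i * real (n-i) * v^(n-i-1) * real i * u^i" .
  have "v * (a i * real (n-i) * real (n-i-1) * u^i * v^(n-i-1-1)) = a i * real (n-i) * u^i * (v * (real (n-i-1) * v^(n-i-1-1)))" by (simp add: algebra_simps)
  also have "\<dots> = a i * real (n-i) * u^i * real (n-i-1) * v^(n-i-1)" by (simp only: pw1 mult.assoc)
  finally have 2: "v * (a i * real (n-i) * real (n-i-1) * u^i * v^(n-i-1-1)) = a i * real (n-i) * u^i * real (n-i-1) * v^(n-i-1)" .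
  have 3: "real (n-i-1) = real n - real i - 1" "real (n-1) = real n - 1" using assms False by (simp_all add: of_nat_diff)
  show ?thesis unfolding 1 2 unfolding 3 by (simp add: algebra_simps)
qed

abbreviation "fG n a \<equiv> G n a (\<lambda>i. i) (\<lambda>i. n - i)"
abbreviation "fx n a \<equiv> G n (\<lambda>i. a i * real i) (\<lambda>i. i - 1) (\<lambda>i. n - i)"
abbreviation "fy n a \<equiv> G n (\<lambda>i. a i * real (n-i)) (\<lambda>i. i) (\<lambda>i. n - i - 1)"
abbreviation "fA n a \<equiv> G n (\<lambda>i. a i * real i * real (i-1)) (\<lambda>i. i - 1 - 1) (\<lambda>i. n - i)"
abbreviation "fB n a \<equiv> G n (\<lambda>i. a i * real i * real (n-i)) (\<lambda>i. i - 1) (\<lambda>i. n - i - 1)"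
abbreviation "fC n a \<equiv> G n (\<lambda>i. a i * real (n-i) * real (n-i-1)) (\<lambda>i. i) (\<lambda>i. n - i - 1 - 1)"

lemma E3: "u * fx n a u v + v * fy n a u v = real n * fG n a u v"
  unfolding G_def sum_distrib_left sum.distrib[symmetric]
  by (rule sum.cong[OF refl], rule term3, simp)
lemma E1: "u * fA n a u v + v * fB n a u v = real (n-1) * fx n a u v"
  unfolding G_def sum_distrib_left sum.distrib[symmetric]
  by (rule sum.cong[OF refl], rule term1, simp)
lemma E2: "u * fB n a u v + v * fC n a u v = real (n-1) * fy n a u v"
  unfolding G_def sum_distrib_left sum.distrib[symmetric]
  by (rule sum.cong[OF refl], rule term2, simp)

lemma derivs: "d_uu (fG n a) u v = fA n a u v" "d_uv (fG n a) u v = fB n a u v" "d_vv (fG n a) u v = fC n a u v"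
  by (simp_all add: d_uu_G d_uv_G d_vv_G)

lemma G_dehom: "y \<noteq> 0 \<Longrightarrow> fG d b x y = y^d * (\<Sum>i\<le>d. b i * (x/y)^i)"
  unfolding G_def sum_distrib_left
proof (rule sum.cong[OF refl])
  fix i assume y: "y \<noteq> 0" and i: "i \<in> {..d}"
  have "y^d = y^i * y^(d-i)" using i by (simp add: power_add[symmetric])
  then show "b i * x ^ i * y ^ (d - i) = y ^ d * (b i * (x / y) ^ i)"
    using y by (simp add: power_divide field_simps)
qed

lemma is_poly2_G: "is_poly2 (fG d b)"
  unfolding is_poly2_def
proof (intro exI allI)
  fix x y :: real
  have "(\<Sum>j\<le>d. (if i + j = d then b i else 0) * x ^ i * y ^ j) = b i * x^i * y^(d-i)" if "i \<le> d" for i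
  proof -
    have "(\<Sum>j\<le>d. (if i + j = d then b i else 0) * x ^ i * y ^ j) = (\<Sum>j\<le>d. if j = d - i then b i * x ^ i * y ^ j else 0)"
      using that by (intro sum.cong) auto
    also have "\<dots> = b i * x^i * y^(d-i)" by simp
    finally show ?thesis .
  qed
  then show "fG d b x y = (\<Sum>i\<le>d. \<Sum>j\<le>d. (if i + j = d then b i else 0) * x ^ i * y ^ j)"
    unfolding G_def by (intro sum.cong) auto
qed

lemma G_scale: "(\<lambda>x y. c0 * fG d b x y) = fG d (\<lambda>i. c0 * b i)"
  unfolding G_def by (intro ext) (simp add: sum_distrib_left algebra_simps)

lemma fx_hom: "fx n a (r * v) v = v^(n-1) * fx n a r 1"
  unfolding G_def sum_distrib_left
proof (rule sum.cong[OF refl])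
  fix i assume i: "i \<in> {..n}"
  show "a i * real i * (r * v) ^ (i - 1) * v ^ (n - i) = v ^ (n - 1) * (a i * real i * r ^ (i - 1) * 1 ^ (n - i))"
  proof (cases "i = 0")
    case False
    then have "v^(n-1) = v^(i-1) * v^(n-i)" using i by (simp add: power_add[symmetric])
    then show ?thesis by (simp add: power_mult_distrib)
  qed simp
qed

lemma cont_G: "continuous_on UNIV (\<lambda>y. fG d b x y)"
  unfolding G_def by (intro continuous_intros)

lemma eq_at0:
  fixes F H :: "real \<Rightarrow> real"
  assumes "continuous_on UNIV F" "continuous_on UNIV H" "\<And>y. y \<noteq> 0 \<Longrightarrow> F y = H y"
  shows "F 0 = H 0"
proof -
  have 1: "(F \<longlongrightarrow> F 0) (at 0)" using assms(1) by (simp add: continuous_on_def)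
  have 2: "(H \<longlongrightarrow> H 0) (at 0)" using assms(2) by (simp add: continuous_on_def)
  have "eventually (\<lambda>y. H y = F y) (at 0)" using assms(3) by (auto simp: eventually_at_filter)
  then have "(F \<longlongrightarrow> H 0) (at (0::real))" by (rule Lim_transform_eventually[OF 2])
  then show ?thesis using tendsto_unique[OF at_neq_bot 1] by blast
qed


lemma factor_v0: assumes "u \<noteq> 0" "fG (m+2) a u 0 = 0" "fy (m+2) a u 0 = 0"
  shows "fG (m+2) a x y = y^2 * fG m a x y"
proof -
  have e1: "fG (m+2) a u 0 = a (m+2) * u^(m+2)"
    unfolding G_def by (simp add: sum.atMost_Suc, rule sum.neutral, auto)
  have e2: "fy (m+2) a u 0 = a (m+1) * u^(m+1)"
    unfolding G_def by (simp add: sum.atMost_Suc, rule sum.neutral, auto)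
  have a1: "a (m+2) = 0" "a (m+1) = 0" using assms e1 e2 by auto
  have "fG (m+2) a x y = (\<Sum>i\<le>m. a i * x^i * y^(m+2-i))"
    unfolding G_def using a1 by (simp add: sum.atMost_Suc)
  also have "\<dots> = y^2 * fG m a x y" unfolding G_def sum_distrib_left
  proof (rule sum.cong[OF refl])
    fix i assume "i \<in> {..m}"
    then have "m + 2 - i = 2 + (m - i)" by auto
    then show "a i * x ^ i * y ^ (m + 2 - i) = y\<^sup>2 * (a i * x ^ i * y ^ (m - i))"
      by (simp add: power_add power2_eq_square)
  qed
  finally show ?thesis .
qed

lemma poly_le: "degree (K::real poly) \<le> d \<Longrightarrow> poly K t = (\<Sum>j\<le>d. coeff K j * t^j)"
proof -
  assume d: "degree K \<le> d"
  have "poly K t = (\<Sum>i\<le>degree K. coeff K i * t ^ i)" by (rule poly_altdef)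
  also have "\<dots> = (\<Sum>j\<le>d. coeff K j * t^j)"
    by (rule sum.mono_neutral_left) (use d in \<open>auto simp: coeff_eq_0\<close>)
  finally show ?thesis .
qed

lemma factor_v: assumes v: "v \<noteq> 0" and n: "2 \<le> n" and f0: "fG n a u v = 0" and fx0: "fx n a u v = 0"
  shows "\<exists>K. \<forall>x y. fG n a x y = (x - (u/v)*y)^2 * fG (n-2) K x y"
proof -
  define P where "P = (\<Sum>i\<le>n. monom (a i) i)"
  define r where "r = u / v"
  have u: "u = r * v" using v by (simp add: r_def)
  have polyP: "poly P t = (\<Sum>i\<le>n. a i * t^i)" for t
    unfolding P_def poly_sum poly_monom ..
  have polyP1: "poly P t = fG n a t 1" for t
    unfolding polyP G_def by simp
  have dehom: "fG n a x y = y^n * poly P (x/y)" if "y \<noteq> 0" for x y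
    using G_dehom[OF that] polyP by simp
  have "poly P r = 0" using dehom[OF v, of u] f0 v u by simp
  have "poly (pderiv P) r = fx n a r 1"
  proof -
    have "((\<lambda>t. poly P t) has_real_derivative poly (pderiv P) r) (at r)" by simp
    moreover have "((\<lambda>t. poly P t) has_real_derivative fx n a r 1) (at r)"
      unfolding polyP1 by (rule G_dx)
    ultimately show ?thesis by (rule DERIV_unique)
  qed
  moreover have "fx n a r 1 = 0" using fx_hom[of n a r v] fx0 u v by simp
  ultimately have pd: "poly (pderiv P) r = 0" by simp
  obtain Q where Q: "P = [:-r,1:] * Q" using \<open>poly P r = 0\<close> poly_eq_0_iff_dvd by blast
  have "pderiv P = [:-r,1:] * pderiv Q + Q" unfolding Q pderiv_mult by (simp add: pderiv_pCons)
  then have "poly Q r = 0" using pd by simp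
  then obtain K where K: "Q = [:-r,1:] * K" using poly_eq_0_iff_dvd by blast
  have degP: "degree P \<le> n" unfolding P_def
    by (rule degree_sum_le) (auto intro: order.trans[OF degree_monom_le])
  have degK: "degree K \<le> n - 2"
  proof (cases "K = 0")
    case False
    have h1: "[:-r,1:] \<noteq> 0" by simp
    have h2: "[:-r,1:] * K \<noteq> 0" using False h1 by (simp only: mult_eq_0_iff) blast
    have "degree P = degree [:-r,1:] + degree ([:-r,1:] * K)" unfolding Q K by (rule degree_mult_eq[OF h1 h2])
    also have "degree ([:-r,1:] * K) = degree [:-r,1:] + degree K" by (rule degree_mult_eq[OF h1 False])
    finally have "degree P = 2 + degree K" by simp
    then show ?thesis using degP by simp
  qed simp
  have main: "fG n a x y = (x - r*y)^2 * fG (n-2) (coeff K) x y" for x y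
  proof -
    have nz: "fG n a x y = (x - r*y)^2 * fG (n-2) (coeff K) x y" if y: "y \<noteq> 0" for y
    proof -
      have A: "fG (n-2) (coeff K) x y = y^(n-2) * poly K (x/y)"
        using G_dehom[OF y, of "n-2" "coeff K" x] poly_le[OF degK, of "x/y"] by simp
      have B: "fG n a x y = y^n * ((x/y - r)^2 * poly K (x/y))"
        unfolding dehom[OF y] Q K by (simp add: power2_eq_square algebra_simps)
      have C: "y^n = y^2 * y^(n-2)" using n by (metis le_add_diff_inverse power_add)
      have D: "y^2 * (x/y - r)^2 = (x - r*y)^2" using y by (simp add: power2_eq_square field_simps)
      have "fG n a x y = (y^2*(x/y-r)^2) * (y^(n-2) * poly K (x/y))" unfolding B C by (simp only: mult_ac)
      then show ?thesis unfolding D A[symmetric] .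
    qed
    moreover have "fG n a x 0 = (x - r*0)^2 * fG (n-2) (coeff K) x 0"
      by (rule eq_at0[where F="\<lambda>y. fG n a x y" and H="\<lambda>y. (x - r*y)^2 * fG (n-2) (coeff K) x y"])
         (unfold G_def, (intro continuous_intros)+, use nz in \<open>auto simp: G_def\<close>)
    ultimately show ?thesis by (cases "y = 0") auto
  qed
  then show ?thesis unfolding r_def by blast
qed

lemma hom_part_G: "hom_part c n = fG n (\<lambda>i. c i (n-i))"
  unfolding hom_part_def G_def by (intro ext) simp

lemma homF0: "n \<ge> 1 \<Longrightarrow> (\<lambda>a b. homF c n a b 0) = hom_part c n"
proof (intro ext)
  fix a b assume "n \<ge> 1"
  then obtain m where m: "n = Suc m" by (cases n) auto
  show "homF c n a b 0 = hom_part c n a b"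
    unfolding homF_def m by (simp add: sum.atMost_Suc, rule sum.neutral, auto)
qed

lemma hess_alg:
  fixes u v aa bb cc mm :: real
  assumes s: "u^2 + v^2 = 1" and e1: "u * aa + v * bb = -mm * v" and e2: "u * bb + v * cc = mm * u"
  shows "aa * cc - bb\<^sup>2 = - (mm\<^sup>2)"
proof -
  have "aa * cc - bb^2 = (aa * cc - bb^2) * (u^2+v^2)" using s by simp
  also have "\<dots> = (u * aa + v * bb) * (-v * bb + u * cc) - (u * bb + v * cc) * (-v * aa + u * bb)"
    by (simp add: power2_eq_square algebra_simps)
  also have "\<dots> = -mm * v * (-v * bb + u * cc) - mm * u * (-v * aa + u * bb)" unfolding e1 e2 ..
  also have "\<dots> = mm * (v * (u * aa + v * bb) - u * (u * bb + v * cc))" by (simp add: algebra_simps)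
  also have "\<dots> = mm * (v * (-mm * v) - u * (mm * u))" unfolding e1 e2 ..
  also have "\<dots> = - (mm^2) * (u^2+v^2)" by (simp add: power2_eq_square algebra_simps)
  finally show ?thesis using s by simp
qed

lemma lin_poly: "is_poly2 (\<lambda>x y. v * x - u*y)"
proof -
  have "(\<lambda>x y. v * x - u*y) = fG 1 (\<lambda>i. if i = 0 then -u else v)"
    unfolding G_def by (intro ext) (simp add: sum.atMost_Suc)
  then show ?thesis using is_poly2_G by simp
qed

lemma double_root:
  assumes n: "n \<ge> 2" and s: "u^2 + v^2 = 1" and f0: "fG n a u v = 0" and fx0: "fx n a u v = 0" and fy0: "fy n a u v = 0"
  shows "\<not> no_repeated_factors (fG n a)"
proof -
  have "\<exists>K. \<forall>x y. fG n a x y = (v * x - u*y)^2 * fG (n-2) K x y"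
  proof (cases "v = 0")
    case True
    then have u: "u \<noteq> 0" using s by auto
    obtain m where m: "n = m + 2" using n by (metis add.commute le_Suc_ex)
    have "fG n a x y = (v * x - u*y)^2 * fG (n-2) (\<lambda>i. a i / u^2) x y" for x y
    proof -
      have "fG n a x y = y^2 * fG m a x y" using factor_v0[OF u] f0 fy0 True m by simp
      moreover have "fG m (\<lambda>i. a i / u^2) x y = fG m a x y / u^2" unfolding G_def
        by (simp add: sum_divide_distrib)
      ultimately show ?thesis using True u m by (simp add: power2_eq_square)
    qed
    then show ?thesis by blast
  next
    case False
    obtain K where K: "\<And>x y. fG n a x y = (x - (u/v)*y)^2 * fG (n-2) K x y"
      using factor_v[OF False n f0 fx0] by blast
    have "fG n a x y = (v * x - u*y)^2 * fG (n-2) (\<lambda>i. K i / v^2) x y" for x y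
    proof -
      have "fG (n-2) (\<lambda>i. K i / v^2) x y = fG (n-2) K x y / v^2" unfolding G_def
        by (simp add: sum_divide_distrib)
      moreover have "(x - (u/v)*y)^2 = (v * x - u*y)^2 / v^2" using False
        by (simp add: power2_eq_square field_simps)
      ultimately show ?thesis using K False by simp
    qed
    then show ?thesis by blast
  qed
  then obtain K where K: "\<And>x y. fG n a x y = (v * x - u*y)^2 * fG (n-2) K x y" by blast
  have nc: "\<not> (\<exists>r. \<forall>x y. v * x - u*y = r)"
  proof
    assume "\<exists>r. \<forall>x y. v * x - u*y = r"
    then obtain r where "\<And>x y. v * x - u*y = r" by blast
    from this[of 0 0] this[of v "-u"] s show False by (simp add: power2_eq_square)
  qed
  show ?thesis unfolding no_repeated_factors_def
    apply (simp only: not_not)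
    apply (rule exI[of _ "\<lambda>x y. v * x - u*y"], rule exI[of _ "fG (n-2) K"])
    using lin_poly is_poly2_G nc K by blast
qed

theorem theorem3:
  fixes c :: "nat \<Rightarrow> nat \<Rightarrow> real" and n :: nat and p :: "real \<times> real \<times> real"
  assumes "has_degree c n" and "n \<ge> 3"
    and "on_sphere p" and "snd (snd p) = 0"
  shows "(flat_point c n p \<longleftrightarrow> singular_point_at_infinity c n p)
    \<and> (\<forall>u0 v0. p = (u0, v0, 0) \<longrightarrow> singular_point_at_infinity c n p
          \<longrightarrow> no_repeated_factors (hom_part c n) \<longrightarrow> hess (hom_part c n) u0 v0 < 0)"
proof -
  obtain u v where p: "p = (u, v, 0)" using assms(4) by (cases p) auto
  have s: "u^2 + v^2 = 1" using assms(3) unfolding p on_sphere_def by simp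
  have flat: "flat_point c n p \<longleftrightarrow> coefS c n u v 0 = 0" unfolding p flat_point_def by simp
  have sing: "singular_point_at_infinity c n p \<longleftrightarrow> coefS c n u v 0 = 0"
  proof
    assume "singular_point_at_infinity c n p"
    then have "formQ c n p (0,0,1) = 0" unfolding singular_point_at_infinity_def singular_point_def
      p tangent_S2_def by auto
    then show "coefS c n u v 0 = 0" unfolding p formQ_def by simp
  next
    assume "coefS c n u v 0 = 0"
    then show "singular_point_at_infinity c n p" using assms(3)
      unfolding singular_point_at_infinity_def singular_point_def p formQ_def by auto
  qed
  define a where "a = (\<lambda>i. c i (n-i))"
  have hp: "hom_part c n = fG n a" unfolding a_def by (rule hom_part_G)
  have hF: "(\<lambda>a b. homF c n a b 0) = fG n a" using homF0[of n c] assms(2) hp by simp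
  have Fuu: "F_uu c n u v 0 = fA n a u v" unfolding F_uu_def hF by (rule derivs)
  have Fuv: "F_uv c n u v 0 = fB n a u v" unfolding F_uv_def hF by (rule derivs)
  have Fvv: "F_vv c n u v 0 = fC n a u v" unfolding F_vv_def hF by (rule derivs)
  have hess: "hess (hom_part c n) u v = fA n a u v * fC n a u v - (fB n a u v)^2"
    unfolding hess_def hp derivs ..
  have S: "coefS c n u v 0 = real (n-1) * (real n * fG n a u v)"
  proof -
    have "coefS c n u v 0 = u * (u * fA n a u v + v * fB n a u v) + v * (u * fB n a u v + v * fC n a u v)"
      unfolding coefS_def Fuu Fuv Fvv by (simp add: power2_eq_square algebra_simps)
    also have "\<dots> = real (n-1) * (u * fx n a u v + v * fy n a u v)"
      unfolding E1 E2 by (simp add: algebra_simps)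
    finally show ?thesis unfolding E3 .
  qed
  have part2: "hess (hom_part c n) u v < 0"
    if sp: "singular_point_at_infinity c n p" and nr: "no_repeated_factors (hom_part c n)"
  proof -
    have "coefS c n u v 0 = 0" using sp sing by simp
    then have f0: "fG n a u v = 0" using S assms(2) by simp
    define l where "l = - v * fx n a u v + u * fy n a u v"
    have e3: "u * fx n a u v + v * fy n a u v = 0" using E3[of u n a v] f0 by simp
    have gx: "fx n a u v = - v * l"
    proof -
      have "fx n a u v = fx n a u v * (u^2 + v^2)" using s by simp
      also have "\<dots> = u * (u * fx n a u v + v * fy n a u v) - v * l"
        unfolding l_def by (simp add: power2_eq_square algebra_simps)
      finally show ?thesis using e3 by simp
    qed
    have gy: "fy n a u v = u * l"
    proof -
      have "fy n a u v = fy n a u v * (u^2 + v^2)" using s by simp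
      also have "\<dots> = v * (u * fx n a u v + v * fy n a u v) + u * l"
        unfolding l_def by (simp add: power2_eq_square algebra_simps)
      finally show ?thesis using e3 by simp
    qed
    show ?thesis
    proof (cases "l = 0")
      case True
      then have "\<not> no_repeated_factors (fG n a)"
        using double_root[of n u v a] assms(2) s f0 gx gy by simp
      then show ?thesis using nr hp by simp
    next
      case False
      have m1: "u * fA n a u v + v * fB n a u v = - (real (n-1) * l) * v" using E1[of u n a v] gx by simp
      have m2: "u * fB n a u v + v * fC n a u v = (real (n-1) * l) * u" using E2[of u n a v] gy by simp
      have "hess (hom_part c n) u v = - ((real (n-1) * l)^2)"
        unfolding hess by (rule hess_alg[OF s m1 m2])
      moreover have "real (n-1) * l \<noteq> 0" using False assms(2) by simp
      ultimately show ?thesis by simp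
    qed
  qed
  show ?thesis using flat sing part2 p by auto
qed
end
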